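(* Let $f:(0,\infty)\to\mathbb R$ be convex with $f(1)=0$, and let $\bar f(x):=\sup_{t>0}\{tx-f(t)\}$, $x\in\mathbb R$, be its convex conjugate. Let $\rho>1$, $n\ge2$, $\mathcal A_n=\{1,\dots,n\}$, and $u_f(n,\rho):=\max_{Q\in\mathcal P_n(\rho)}D_f(Q\|U_n)$. Then: (a) for every $P\in\mathcal P_n(\rho)$, $X\sim P$, and every $g:\mathcal A_n\to\mathbb R$: $\mathbb E[g(X)]\le u_f(n,\rho)+\frac1n\sum_{i=1}^n\bar f(g(i))$; (b) there exists $P\in\mathcal P_n(\rho)$ such that for every $\varepsilon>0$ there is $g_\varepsilon:\mathcal A_n\to\mathbb R$ with $\mathbb E[g_\varepsilon(X)]\ge u_f(n,\rho)+\frac1n\sum_{i=1}^n\bar f(g_\varepsilon(i))-\varepsilon$, where $X\sim P$.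
   Context: $\mathcal P_n(\rho)$: probability mass functions on $\mathcal A_n$ with all masses positive and max/min mass ratio at most $\rho$; $U_n$ uniform on $\mathcal A_n$; $D_f(P\|Q)=\sum_xQ(x)f(P(x)/Q(x))$ (conventions $0f(0/0)=0$, $f(0)=\lim_{t\to0^+}f(t)$). *)

theory Defs
  imports "HOL-Analysis.Analysis"
begin

text \<open>Alphabet A_n = {1..n}; distributions on A_n are functions nat => real,
  vanishing outside {1..n}.\<close>

definition Pn :: "nat \<Rightarrow> real \<Rightarrow> (nat \<Rightarrow> real) set" where
  "Pn n \<rho> = {P. (\<forall>i\<in>{1..n}. P i > 0) \<and> (\<forall>i. i \<notin> {1..n} \<longrightarrow> P i = 0)
     \<and> (\<Sum>i=1..n. P i) = 1 \<and> (\<forall>i\<in>{1..n}. \<forall>j\<in>{1..n}. P i \<le> \<rho> * P j)}"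

definition unif :: "nat \<Rightarrow> nat \<Rightarrow> real" where
  "unif n i = (if i \<in> {1..n} then 1 / real n else 0)"

text \<open>f(0) convention: limit from the right (f is only given on (0,inf)).\<close>
definition fext :: "(real \<Rightarrow> real) \<Rightarrow> real \<Rightarrow> real" where
  "fext f t = (if t > 0 then f t else Lim (at_right 0) f)"

text \<open>f-divergence D_f(P||Q) on A_n, for a reference Q with full support
  (the only case used: Q = U_n); then the term 0 f(0/0) never occurs.\<close>
definition Df :: "(real \<Rightarrow> real) \<Rightarrow> nat \<Rightarrow> (nat \<Rightarrow> real) \<Rightarrow> (nat \<Rightarrow> real) \<Rightarrow> real" where
  "Df f n P Q = (\<Sum>i=1..n. Q i * fext f (P i / Q i))"

definition uf :: "(real \<Rightarrow> real) \<Rightarrow> nat \<Rightarrow> real \<Rightarrow> real" where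
  "uf f n \<rho> = (SUP Q\<in>Pn n \<rho>. Df f n Q (unif n))"

definition fconj :: "(real \<Rightarrow> real) \<Rightarrow> real \<Rightarrow> ereal" where
  "fconj f x = (SUP t\<in>{0<..}. ereal (t * x - f t))"

end

theory Submission
  imports Defs
begin

lemma subgrad:
  fixes f :: "real \<Rightarrow> real"
  assumes cv: "convex_on {0<..} f" and x: "x > 0"
  shows "\<exists>c. \<forall>t>0. f x + c * (t - x) \<le> f t"
proof -
  define S where "S = (\<lambda>s. (f x - f s) / (x - s)) ` {0<..<x}"
  have sl: "(f x - f s) / (x - s) \<le> (f y - f x) / (y - x)" if "0 < s" "s < x" "x < y" for s y
  proof -
    have "(f s - f y) / (s - y) \<le> (f x - f y) / (x - y)"
      using convex_on_slope_le(2)[OF cv, of s y x] that by auto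
    moreover have "(f s - f x) / (s - x) \<le> (f s - f y) / (s - y)"
      using convex_on_slope_le(1)[OF cv, of s y x] that by auto
    moreover have "(f x - f s) / (x - s) = (f s - f x) / (s - x)"
      by (metis minus_diff_eq minus_divide_divide)
    moreover have "(f y - f x) / (y - x) = (f x - f y) / (x - y)"
      by (metis minus_diff_eq minus_divide_divide)
    ultimately show ?thesis by linarith
  qed
  have ne: "S \<noteq> {}" using x unfolding S_def by auto
  have bdd: "bdd_above S" unfolding S_def
    by (rule bdd_aboveI[where M="(f (x+1) - f x) / (x + 1 - x)"]) (use sl[of _ "x+1"] x in force)
  define c where "c = Sup S"
  have "f x + c * (t - x) \<le> f t" if t: "t > 0" for t
  proof (cases t x rule: linorder_cases)
    case less
    have "(f x - f t) / (x - t) \<le> c" unfolding c_def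
      by (rule cSup_upper[OF _ bdd]) (use less t S_def in auto)
    then have "f x - f t \<le> c * (x - t)" using less by (simp add: divide_le_eq)
    then show ?thesis by (simp add: algebra_simps)
  next
    case equal then show ?thesis by simp
  next
    case greater
    have "c \<le> (f t - f x) / (t - x)" unfolding c_def
      by (rule cSup_least[OF ne]) (use sl greater S_def in auto)
    then have "c * (t - x) \<le> f t - f x" using greater by (simp add: le_divide_eq)
    then show ?thesis by (simp add: algebra_simps)
  qed
  then show ?thesis by blast
qed

lemma fconj_ge:
  assumes "t > 0" shows "ereal (t * x - f t) \<le> fconj f x"
  unfolding fconj_def by (rule SUP_upper) (use assms in auto)

lemma fconj_eq:
  assumes "x > 0" "\<forall>t>0. f x + c * (t - x) \<le> f t"
  shows "fconj f c = ereal (x * c - f x)"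
proof (rule antisym)
  show "fconj f c \<le> ereal (x * c - f x)" unfolding fconj_def
  proof (rule SUP_least)
    fix t :: real assume "t \<in> {0<..}"
    then have "f x + c * (t - x) \<le> f t" using assms by auto
    then show "ereal (t * c - f t) \<le> ereal (x * c - f x)" by (simp add: algebra_simps)
  qed
  show "ereal (x * c - f x) \<le> fconj f c" by (rule fconj_ge) (use assms in auto)
qed

lemma Pn_pos_bound:
  assumes "P \<in> Pn n \<rho>" "i \<in> {1..n}"
  shows "P i > 0" "P i \<le> 1"
proof -
  show "P i > 0" using assms unfolding Pn_def by auto
  have "P i \<le> (\<Sum>j=1..n. P j)"
    by (rule member_le_sum) (use assms in \<open>auto simp: Pn_def less_imp_le\<close>)
  then show "P i \<le> 1" using assms unfolding Pn_def by auto
qed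

lemma Pn_eq:
  assumes "\<rho> > 1"
  shows "Pn n \<rho> = {P. (\<forall>i. i \<notin> {1..n} \<longrightarrow> P i = 0)
     \<and> (\<Sum>i=1..n. P i) = 1 \<and> (\<forall>i\<in>{1..n}. \<forall>j\<in>{1..n}. P i \<le> \<rho> * P j)}" (is "_ = ?C")
proof
  show "Pn n \<rho> \<subseteq> ?C" unfolding Pn_def by auto
  show "?C \<subseteq> Pn n \<rho>"
  proof
    fix P assume P: "P \<in> ?C"
    have "P i > 0" if i: "i \<in> {1..n}" for i
    proof (rule ccontr)
      assume "\<not> P i > 0"
      have "P j \<le> 0" if j: "j \<in> {1..n}" for j
      proof -
        have "P j \<le> \<rho> * P i" using P i j by auto
        moreover have "\<rho> * P i \<le> 0" using \<open>\<not> P i > 0\<close> assms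
          by (intro mult_nonneg_nonpos) auto
        ultimately show ?thesis by linarith
      qed
      then have "\<forall>j\<in>{1..n}. P j \<le> 0" by blast
      then have "(\<Sum>j=1..n. P j) \<le> 0" by (intro sum_nonpos) auto
      then show False using P by auto
    qed
    then show "P \<in> Pn n \<rho>" using P unfolding Pn_def by auto
  qed
qed

lemma Pn_compact:
  assumes "\<rho> > 1"
  shows "compact (Pn n \<rho>)"
proof -
  define K where "K = PiE UNIV (\<lambda>i::nat. if i \<in> {1..n} then {0..1::real} else {0})"
  have "compactin (product_topology (\<lambda>i. euclidean) UNIV) K"
    unfolding K_def by (subst compactin_PiE) auto
  then have cK: "compact K" by (simp add: euclidean_product_topology)
  define C where "C = (\<Inter>i\<in>- {1..n}. {P::nat\<Rightarrow>real. P i = 0}) \<inter> {P. (\<Sum>i=1..n. P i) = 1}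
       \<inter> (\<Inter>i\<in>{1..n}. \<Inter>j\<in>{1..n}. {P. P i \<le> \<rho> * P j})"
  have cC: "closed C" unfolding C_def
    by (intro closed_Int closed_INT ballI closed_Collect_eq closed_Collect_le continuous_intros
        continuous_on_product_coordinates)
  have "Pn n \<rho> = K \<inter> C"
  proof
    show "Pn n \<rho> \<subseteq> K \<inter> C"
    proof
      fix P assume P: "P \<in> Pn n \<rho>"
      then have "P \<in> K" unfolding K_def using Pn_pos_bound[OF P] by (auto simp: Pn_def less_imp_le)
      moreover have "P \<in> C" using P unfolding C_def Pn_def by auto
      ultimately show "P \<in> K \<inter> C" by auto
    qed
    show "K \<inter> C \<subseteq> Pn n \<rho>" unfolding Pn_eq[OF assms] C_def by auto
  qed
  then show ?thesis using compact_Int_closed[OF cK cC] by simp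
qed

theorem theorem10:
  fixes f :: "real \<Rightarrow> real" and \<rho> :: real and n :: nat
  assumes "convex_on {0<..} f" and "f 1 = 0" and "\<rho> > 1" and "n \<ge> 2"
  shows "(\<forall>P\<in>Pn n \<rho>. \<forall>g :: nat \<Rightarrow> real.
            ereal (\<Sum>i=1..n. P i * g i)
              \<le> ereal (uf f n \<rho>) + ereal (1 / real n) * (\<Sum>i=1..n. fconj f (g i)))
       \<and> (\<exists>P\<in>Pn n \<rho>. \<forall>\<epsilon>>0. \<exists>g :: nat \<Rightarrow> real.
            ereal (\<Sum>i=1..n. P i * g i)
              \<ge> ereal (uf f n \<rho>) + ereal (1 / real n) * (\<Sum>i=1..n. fconj f (g i)) - ereal \<epsilon>)"
proof -
  have nz: "real n > 0" using assms(4) by auto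
  define F where "F = (\<lambda>Q::nat\<Rightarrow>real. (\<Sum>i=1..n. (1 / real n) * f (real n * Q i)))"
  have DfF: "Df f n Q (unif n) = F Q" if "Q \<in> Pn n \<rho>" for Q
    unfolding Df_def F_def unif_def
  proof (rule sum.cong)
    fix i assume i: "i \<in> {1..n}"
    then have "Q i > 0" using that by (simp add: Pn_def)
    then show "(if i \<in> {1..n} then 1 / real n else 0) *
         fext f (Q i / (if i \<in> {1..n} then 1 / real n else 0)) = 1 / real n * f (real n * Q i)"
      using i nz by (simp add: fext_def mult.commute)
  qed simp
  have unifP: "unif n \<in> Pn n \<rho>"
    using nz assms(3) by (auto simp: Pn_def unif_def divide_right_mono)
  have contf: "continuous_on {0<..} f"
    by (rule convex_on_continuous) (use assms(1) in auto)
  have contF: "continuous_on (Pn n \<rho>) F"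
    unfolding F_def
  proof (intro continuous_on_sum continuous_on_mult continuous_on_const)
    fix i assume i: "i \<in> {1..n}"
    show "continuous_on (Pn n \<rho>) (\<lambda>Q. f (real n * Q i))"
    proof (rule continuous_on_compose2[OF contf])
      show "continuous_on (Pn n \<rho>) (\<lambda>Q. real n * Q i)"
        by (intro continuous_intros continuous_on_subset[OF continuous_on_product_coordinates]) auto
      show "(\<lambda>Q. real n * Q i) ` Pn n \<rho> \<subseteq> {0<..}"
        using i nz by (auto simp: Pn_def)
    qed
  qed
  obtain P0 where P0: "P0 \<in> Pn n \<rho>" and P0max: "\<And>Q. Q \<in> Pn n \<rho> \<Longrightarrow> F Q \<le> F P0"
    using continuous_attains_sup[OF Pn_compact[OF assms(3)] _ contF] unifP by blast
  have ufeq: "uf f n \<rho> = F P0"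
    unfolding uf_def
  proof (rule cSup_eq_maximum)
    show "F P0 \<in> (\<lambda>Q. Df f n Q (unif n)) ` Pn n \<rho>" using P0 DfF by force
    show "\<And>y. y \<in> (\<lambda>Q. Df f n Q (unif n)) ` Pn n \<rho> \<Longrightarrow> y \<le> F P0"
      using P0max DfF by auto
  qed
  have partA: "ereal (\<Sum>i=1..n. P i * g i)
       \<le> ereal (uf f n \<rho>) + ereal (1 / real n) * (\<Sum>i=1..n. fconj f (g i))"
    if P: "P \<in> Pn n \<rho>" for P and g :: "nat \<Rightarrow> real"
  proof -
    have "(\<Sum>i=1..n. ereal (real n * P i * g i - f (real n * P i))) \<le> (\<Sum>i=1..n. fconj f (g i))"
    proof (rule sum_mono)
      fix i assume i: "i \<in> {1..n}"
      then have "real n * P i > 0" using P nz by (simp add: Pn_def)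
      then show "ereal (real n * P i * g i - f (real n * P i)) \<le> fconj f (g i)"
        by (rule fconj_ge)
    qed
    then have "ereal (\<Sum>i=1..n. real n * P i * g i - f (real n * P i)) \<le> (\<Sum>i=1..n. fconj f (g i))"
      by (simp add: sum_ereal)
    then have "ereal (1 / real n) * ereal (\<Sum>i=1..n. real n * P i * g i - f (real n * P i))
        \<le> ereal (1 / real n) * (\<Sum>i=1..n. fconj f (g i))"
      by (rule ereal_mult_left_mono) simp
    then have A: "ereal ((1 / real n) * (\<Sum>i=1..n. real n * P i * g i - f (real n * P i)))
        \<le> ereal (1 / real n) * (\<Sum>i=1..n. fconj f (g i))" by simp
    have B: "(1 / real n) * (\<Sum>i=1..n. real n * P i * g i - f (real n * P i))
        = (\<Sum>i=1..n. P i * g i) - F P"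
      unfolding F_def using nz
      by (simp add: sum_distrib_left sum_subtractf algebra_simps)
    have "F P \<le> uf f n \<rho>" using P0max[OF P] ufeq by simp
    then have "ereal (\<Sum>i=1..n. P i * g i) \<le> ereal (uf f n \<rho>) + ereal ((\<Sum>i=1..n. P i * g i) - F P)"
      by simp
    also have "\<dots> \<le> ereal (uf f n \<rho>) + ereal (1 / real n) * (\<Sum>i=1..n. fconj f (g i))"
      using A B by (intro add_left_mono) simp
    finally show ?thesis .
  qed
  have partB: "\<exists>g :: nat \<Rightarrow> real. ereal (\<Sum>i=1..n. P0 i * g i)
        \<ge> ereal (uf f n \<rho>) + ereal (1 / real n) * (\<Sum>i=1..n. fconj f (g i)) - ereal \<epsilon>"
    if e: "\<epsilon> > 0" for \<epsilon>
  proof -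
    have "\<forall>i. \<exists>c. i \<in> {1..n} \<longrightarrow> (\<forall>t>0. f (real n * P0 i) + c * (t - real n * P0 i) \<le> f t)"
    proof
      fix i show "\<exists>c. i \<in> {1..n} \<longrightarrow> (\<forall>t>0. f (real n * P0 i) + c * (t - real n * P0 i) \<le> f t)"
      proof (cases "i \<in> {1..n}")
        case True
        then have "real n * P0 i > 0" using P0 nz by (simp add: Pn_def)
        then show ?thesis using subgrad[OF assms(1)] by blast
      qed auto
    qed
    then obtain g where g: "\<And>i. i \<in> {1..n} \<Longrightarrow> \<forall>t>0. f (real n * P0 i) + g i * (t - real n * P0 i) \<le> f t"
      by metis
    have fc: "fconj f (g i) = ereal (real n * P0 i * g i - f (real n * P0 i))" if i: "i \<in> {1..n}" for i
      by (rule fconj_eq) (use i g P0 nz in \<open>auto simp: Pn_def\<close>)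
    have "(\<Sum>i=1..n. fconj f (g i)) = ereal (\<Sum>i=1..n. real n * P0 i * g i - f (real n * P0 i))"
      using fc by (simp add: sum_ereal)
    then have "ereal (uf f n \<rho>) + ereal (1 / real n) * (\<Sum>i=1..n. fconj f (g i)) - ereal \<epsilon>
       = ereal (uf f n \<rho> + (1 / real n) * (\<Sum>i=1..n. real n * P0 i * g i - f (real n * P0 i)) - \<epsilon>)"
      by simp
    also have "(1 / real n) * (\<Sum>i=1..n. real n * P0 i * g i - f (real n * P0 i))
        = (\<Sum>i=1..n. P0 i * g i) - F P0"
      unfolding F_def using nz
      by (simp add: sum_distrib_left sum_subtractf algebra_simps)
    finally show ?thesis using ufeq e by (intro exI[of _ g]) simp
  qed
  show ?thesis using partA partB P0 by blast
qed

end
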